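(* Let $G$ be a mean-payoff game with partial-observation and $G'$ its limited-observation counterpart (defined below). Eve has a winning observation-based strategy in $G$ if and only if she has a winning observation-based strategy in $G'$.
   Context: An MPG with partial-observation is a tuple $G=\langle Q,q_I,\Sigma,\Delta,w,Obs\rangle$: $Q$ finite set of states, $q_I\in Q$, $\Sigma$ finite set of actions, $\Delta\subseteq Q\times\Sigma\times Q$ total, $w:\Delta\to\mathbb{Z}$, $Obs$ a partition of $Q$. $\mathrm{post}_\sigma(s)=\{q':\exists q\in s,(q,\sigma,q')\in\Delta\}$. Plays are infinite abstract paths $o_0\sigma_0o_1\ldots$ ($o_i\in Obs$, with some $\sigma_i$-transition from a state of $o_i$ to a state of $o_{i+1}$) starting at the observation containing the initial state; $\gamma(\psi)$ is the set of concrete paths $q_0\sigma_0q_1\ldots$ with $q_i\in o_i$ and $(q_i,\sigma_i,q_{i+1})\in\Delta$; $\underline{MP}(\pi)=\liminf_n\frac1n\sum_{i<n}w(q_i,\sigma_i,q_{i+1})$. An observation-based strategy for Eve maps finite play prefixes ending in an observation to actions; a play $o_0\sigma_0\ldots$ is consistent with $\lambda$ if $\sigma_i=\lambda(o_0\sigma_0\ldots o_i)$; $\lambda$ is winning if every consistent play $\psi$ satisfies $\underline{MP}(\pi)\ge0$ for all $\pi\in\gamma(\psi)$. The limited-observation counterpart of $G$ is $G'=\langle Q',q'_I,\Sigma,\Delta',w',Obs'\rangle$ with $Q'=\{(q,K)\in Q\times2^Q: q\in K,\ K\subseteq o\text{ for some }o\in Obs\}$, $q'_I=(q_I,\{q_I\})$,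 $Obs'=\{\{(q,K):q\in K\}: \emptyset\ne K\subseteq o\text{ for some }o\in Obs\}$, $\Delta'$ consisting of the triples $((q,K),\sigma,(q',K'))$ with $(q,\sigma,q')\in\Delta$ and $K'=\mathrm{post}_\sigma(K)\cap o$ for some $o\in Obs$, and $w'((q,K),\sigma,(q',K'))=w(q,\sigma,q')$. *)

theory Defs
  imports "HOL-Library.Extended_Real" "HOL-Library.Liminf_Limsup" "HOL-Library.Disjoint_Sets"
begin

record ('q, 'a) mpg =
  states  :: "'q set"
  init    :: "'q"
  actions :: "'a set"
  trans   :: "('q \<times> 'a \<times> 'q) set"
  weight  :: "'q \<times> 'a \<times> 'q \<Rightarrow> int"
  obs     :: "'q set set"

definition mpg_po :: "('q, 'a) mpg \<Rightarrow> bool" where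
  "mpg_po G \<longleftrightarrow>
     finite (states G) \<and> init G \<in> states G \<and> finite (actions G) \<and>
     trans G \<subseteq> states G \<times> actions G \<times> states G \<and>
     (\<forall>q\<in>states G. \<forall>\<sigma>\<in>actions G. \<exists>q'. (q, \<sigma>, q') \<in> trans G) \<and>
     partition_on (states G) (obs G)"

definition post :: "('q, 'a) mpg \<Rightarrow> 'a \<Rightarrow> 'q set \<Rightarrow> 'q set" where
  "post G \<sigma> s = {q'. \<exists>q\<in>s. (q, \<sigma>, q') \<in> trans G}"

text \<open>A play o0 s0 o1 s1 ... is represented by the sequences os (observations) and as (actions).\<close>
definition is_play :: "('q, 'a) mpg \<Rightarrow> (nat \<Rightarrow> 'q set) \<Rightarrow> (nat \<Rightarrow> 'a) \<Rightarrow> bool" where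
  "is_play G os as \<longleftrightarrow>
     init G \<in> os 0 \<and>
     (\<forall>i. os i \<in> obs G \<and> as i \<in> actions G \<and>
          (\<exists>q\<in>os i. \<exists>q'\<in>os (Suc i). (q, as i, q') \<in> trans G))"

definition concretisation :: "('q, 'a) mpg \<Rightarrow> (nat \<Rightarrow> 'q set) \<Rightarrow> (nat \<Rightarrow> 'a) \<Rightarrow> (nat \<Rightarrow> 'q) set" where
  "concretisation G os as =
     {qs. qs 0 = init G \<and> (\<forall>i. qs i \<in> os i \<and> (qs i, as i, qs (Suc i)) \<in> trans G)}"

definition low_mp :: "('q, 'a) mpg \<Rightarrow> (nat \<Rightarrow> 'q) \<Rightarrow> (nat \<Rightarrow> 'a) \<Rightarrow> ereal" where
  "low_mp G qs as =
     liminf (\<lambda>n. ereal ((\<Sum>i<n. real_of_int (weight G (qs i, as i, qs (Suc i)))) / real n))"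

text \<open>Observation-based strategy: the prefix o0 s0 ... o_n is given by the list of
  observations [o0..o_n] and the list of actions [s0..s_(n-1)].\<close>
type_synonym ('q, 'a) strategy = "'q set list \<Rightarrow> 'a list \<Rightarrow> 'a"

definition obs_strategy :: "('q, 'a) mpg \<Rightarrow> ('q, 'a) strategy \<Rightarrow> bool" where
  "obs_strategy G str \<longleftrightarrow> (\<forall>ol al. str ol al \<in> actions G)"

definition consistent :: "('q, 'a) strategy \<Rightarrow> (nat \<Rightarrow> 'q set) \<Rightarrow> (nat \<Rightarrow> 'a) \<Rightarrow> bool" where
  "consistent str os as \<longleftrightarrow> (\<forall>i. as i = str (map os [0..<Suc i]) (map as [0..<i]))"

definition winning :: "('q, 'a) mpg \<Rightarrow> ('q, 'a) strategy \<Rightarrow> bool" where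
  "winning G str \<longleftrightarrow> obs_strategy G str \<and>
     (\<forall>os as. is_play G os as \<and> consistent str os as \<longrightarrow>
        (\<forall>qs\<in>concretisation G os as. low_mp G qs as \<ge> 0))"

definition eve_wins :: "('q, 'a) mpg \<Rightarrow> bool" where
  "eve_wins G \<longleftrightarrow> (\<exists>str. winning G str)"

definition lo_states :: "('q, 'a) mpg \<Rightarrow> ('q \<times> 'q set) set" where
  "lo_states G = {(q, K). q \<in> K \<and> (\<exists>ob\<in>obs G. K \<subseteq> ob)}"

definition lo_counterpart :: "('q, 'a) mpg \<Rightarrow> ('q \<times> 'q set, 'a) mpg" where
  "lo_counterpart G =
     \<lparr> states = lo_states G,
       init = (init G, {init G}),
       actions = actions G,
       trans = {((q, K), \<sigma>, (q', K')). (q, K) \<in> lo_states G \<and> (q', K') \<in> lo_states G \<and>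
                  (q, \<sigma>, q') \<in> trans G \<and> (\<exists>ob\<in>obs G. K' = post G \<sigma> K \<inter> ob)},
       weight = (\<lambda>((q, K), \<sigma>, (q', K')). weight G (q, \<sigma>, q')),
       obs = {{(q, K) | q. q \<in> K} | K. K \<noteq> {} \<and> (\<exists>ob\<in>obs G. K \<subseteq> ob)} \<rparr>"

end

theory Submission
  imports Defs
begin

lemma lo_weight: "weight (lo_counterpart G) (x, s, y) = weight G (fst x, s, fst y)"
  by (cases x; cases y) (simp add: lo_counterpart_def)

lemma lo_mp: "low_mp (lo_counterpart G) qs' as = low_mp G (fst \<circ> qs') as"
  unfolding low_mp_def by (simp add: lo_weight)

lemma lo_obs_fst:
  assumes "X \<in> obs (lo_counterpart G)"
  shows "\<exists>ob\<in>obs G. fst ` X \<subseteq> ob" "X = {(q, fst ` X) | q. q \<in> fst ` X}"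
proof -
  from assms obtain K ob where K: "K \<noteq> {}" "ob \<in> obs G" "K \<subseteq> ob" "X = {(q, K) | q. q \<in> K}"
    by (auto simp: lo_counterpart_def)
  have "fst ` X = K" using K(4) by (auto simp: image_iff)
  then show "\<exists>ob\<in>obs G. fst ` X \<subseteq> ob" "X = {(q, fst ` X) | q. q \<in> fst ` X}"
    using K by auto
qed

definition blk :: "('q, 'a) mpg \<Rightarrow> ('q \<times> 'q set) set \<Rightarrow> 'q set" where
  "blk G X = (SOME ob. ob \<in> obs G \<and> fst ` X \<subseteq> ob)"

lemma blk_prop:
  assumes "X \<in> obs (lo_counterpart G)"
  shows "blk G X \<in> obs G \<and> fst ` X \<subseteq> blk G X"
  using lo_obs_fst(1)[OF assms] unfolding blk_def by (metis (mono_tags, lifting) someI_ex)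

lemma dir1:
  assumes "winning G str"
  shows "winning (lo_counterpart G) (\<lambda>ol al. str (map (blk G) ol) al)"
  unfolding winning_def
proof (intro conjI allI impI ballI)
  show "obs_strategy (lo_counterpart G) (\<lambda>ol al. str (map (blk G) ol) al)"
    using assms by (simp add: winning_def obs_strategy_def lo_counterpart_def)
next
  fix os' as qs'
  assume pc: "is_play (lo_counterpart G) os' as \<and> consistent (\<lambda>ol al. str (map (blk G) ol) al) os' as"
    and qc: "qs' \<in> concretisation (lo_counterpart G) os' as"
  define os where "os = blk G \<circ> os'"
  have bp: "\<And>i. blk G (os' i) \<in> obs G \<and> fst ` os' i \<subseteq> blk G (os' i)"
    using pc by (intro blk_prop) (simp add: is_play_def)
  have cons: "consistent str os as"
    using pc unfolding consistent_def os_def by (simp add: map_map)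
  have play: "is_play G os as"
    unfolding is_play_def
  proof (intro conjI allI)
    have "(init G, {init G}) \<in> os' 0" using pc by (simp add: is_play_def lo_counterpart_def)
    then show "init G \<in> os 0" using bp[of 0] unfolding os_def by force
  next
    fix i
    show "os i \<in> obs G" using bp[of i] by (simp add: os_def)
    show "as i \<in> actions G" using pc by (simp add: is_play_def lo_counterpart_def)
    from pc obtain x y where xy: "x \<in> os' i" "y \<in> os' (Suc i)" "(x, as i, y) \<in> trans (lo_counterpart G)"
      unfolding is_play_def by blast
    then have "(fst x, as i, fst y) \<in> trans G"
      by (cases x; cases y) (auto simp: lo_counterpart_def)
    moreover have "fst x \<in> os i" "fst y \<in> os (Suc i)"
      using xy bp[of i] bp[of "Suc i"] unfolding os_def by force+
    ultimately show "\<exists>q\<in>os i. \<exists>q'\<in>os (Suc i). (q, as i, q') \<in> trans G" by blast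
  qed
  have "fst \<circ> qs' \<in> concretisation G os as"
    unfolding concretisation_def
  proof (intro CollectI conjI allI)
    show "(fst \<circ> qs') 0 = init G" using qc by (simp add: concretisation_def lo_counterpart_def)
  next
    fix i
    show "(fst \<circ> qs') i \<in> os i" using qc bp[of i] unfolding os_def concretisation_def by force
    have "(qs' i, as i, qs' (Suc i)) \<in> trans (lo_counterpart G)"
      using qc by (simp add: concretisation_def)
    then show "((fst \<circ> qs') i, as i, (fst \<circ> qs') (Suc i)) \<in> trans G"
      by (cases "qs' i"; cases "qs' (Suc i)") (auto simp: lo_counterpart_def)
  qed
  then have "low_mp G (fst \<circ> qs') as \<ge> 0" using assms play cons by (auto simp: winning_def)
  then show "0 \<le> low_mp (lo_counterpart G) qs' as" by (simp add: lo_mp)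
qed

fun kn :: "('q, 'a) mpg \<Rightarrow> 'q set list \<Rightarrow> 'a list \<Rightarrow> nat \<Rightarrow> 'q set" where
  "kn G ol al 0 = {init G}"
| "kn G ol al (Suc n) = post G (al ! n) (kn G ol al n) \<inter> ol ! Suc n"

definition OK :: "'q set \<Rightarrow> ('q \<times> 'q set) set" where
  "OK K = {(q, K) | q. q \<in> K}"

fun Kseq :: "('q, 'a) mpg \<Rightarrow> (nat \<Rightarrow> 'q set) \<Rightarrow> (nat \<Rightarrow> 'a) \<Rightarrow> nat \<Rightarrow> 'q set" where
  "Kseq G os as 0 = {init G}"
| "Kseq G os as (Suc n) = post G (as n) (Kseq G os as n) \<inter> os (Suc n)"

lemma kn_Kseq: "j \<le> i \<Longrightarrow> kn G (map os [0..<Suc i]) (map as [0..<i]) j = Kseq G os as j"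
proof (induction j)
  case 0 then show ?case by simp
next
  case (Suc j)
  have "map os [0..<Suc i] ! Suc j = os (Suc j)"
    using Suc.prems by (simp del: upt_Suc)
  moreover have "map as [0..<i] ! j = as j" using Suc.prems by simp
  ultimately show ?case using Suc by simp
qed

lemma dir2:
  assumes "winning (lo_counterpart G) str"
  shows "winning G (\<lambda>ol al. str (map (\<lambda>j. OK (kn G ol al j)) [0..<length ol]) al)"
  unfolding winning_def
proof (intro conjI allI impI ballI)
  show "obs_strategy G (\<lambda>ol al. str (map (\<lambda>j. OK (kn G ol al j)) [0..<length ol]) al)"
    using assms by (simp add: winning_def obs_strategy_def lo_counterpart_def)
next
  fix os as qs
  assume pc: "is_play G os as \<and> consistent (\<lambda>ol al. str (map (\<lambda>j. OK (kn G ol al j)) [0..<length ol]) al) os as"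
    and qc: "qs \<in> concretisation G os as"
  define K where "K = Kseq G os as"
  have qK: "qs i \<in> K i" for i
  proof (induction i)
    case 0 then show ?case using qc by (simp add: K_def concretisation_def)
  next
    case (Suc i) then show ?case using qc by (auto simp: K_def concretisation_def post_def)
  qed
  have Ksub: "K i \<subseteq> os i" for i
    using pc by (cases i) (auto simp: K_def is_play_def)
  have osobs: "os i \<in> obs G" for i using pc by (simp add: is_play_def)
  define os' where "os' i = OK (K i)" for i
  define qs' where "qs' i = (qs i, K i)" for i
  have lo: "(qs i, K i) \<in> lo_states G" for i
    using qK[of i] Ksub[of i] osobs[of i] unfolding lo_states_def by blast
  have tr: "(qs' i, as i, qs' (Suc i)) \<in> trans (lo_counterpart G)" for i
  proof -
    have "(qs i, as i, qs (Suc i)) \<in> trans G" using qc by (simp add: concretisation_def)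
    moreover have "K (Suc i) = post G (as i) (K i) \<inter> os (Suc i)" by (simp add: K_def)
    ultimately show ?thesis using lo[of i] lo[of "Suc i"] osobs[of "Suc i"]
      by (auto simp: qs'_def lo_counterpart_def)
  qed
  have obs': "os' i \<in> obs (lo_counterpart G)" for i
    using qK[of i] Ksub[of i] osobs[of i]
    by (auto simp: os'_def OK_def lo_counterpart_def)
  have play: "is_play (lo_counterpart G) os' as"
    unfolding is_play_def
  proof (intro conjI allI)
    show "init (lo_counterpart G) \<in> os' 0"
      by (simp add: os'_def OK_def K_def lo_counterpart_def)
  next
    fix i
    show "os' i \<in> obs (lo_counterpart G)" by (rule obs')
    show "as i \<in> actions (lo_counterpart G)" using pc by (simp add: is_play_def lo_counterpart_def)
    show "\<exists>q\<in>os' i. \<exists>q'\<in>os' (Suc i). (q, as i, q') \<in> trans (lo_counterpart G)"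
      using tr[of i] qK[of i] qK[of "Suc i"] by (auto simp: os'_def OK_def qs'_def)
  qed
  have cons: "consistent str os' as"
    unfolding consistent_def
  proof
    fix i
    have "as i = str (map (\<lambda>j. OK (kn G (map os [0..<Suc i]) (map as [0..<i]) j)) [0..<Suc i]) (map as [0..<i])"
      using pc unfolding consistent_def by (metis length_map length_upt minus_nat.diff_0)
    also have "map (\<lambda>j. OK (kn G (map os [0..<Suc i]) (map as [0..<i]) j)) [0..<Suc i] = map os' [0..<Suc i]"
      by (rule map_cong) (auto simp: kn_Kseq os'_def K_def simp del: upt_Suc)
    finally show "as i = str (map os' [0..<Suc i]) (map as [0..<i])" .
  qed
  have "qs' \<in> concretisation (lo_counterpart G) os' as"
    unfolding concretisation_def
    using tr qK qc by (auto simp: qs'_def os'_def OK_def K_def lo_counterpart_def concretisation_def)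
  then have "low_mp (lo_counterpart G) qs' as \<ge> 0" using assms play cons by (auto simp: winning_def)
  moreover have "fst \<circ> qs' = qs" by (auto simp: qs'_def)
  ultimately show "0 \<le> low_mp G qs as" by (simp add: lo_mp)
qed

theorem theorem13:
  fixes G :: "('q, 'a) mpg"
  assumes "mpg_po G"
  shows "eve_wins G \<longleftrightarrow> eve_wins (lo_counterpart G)"
  unfolding eve_wins_def using dir1 dir2 by blast

end
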